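(* Let $G$ be a cubic graph with a 3-decomposition, let $u$ be a vertex of $G$ with neighbours $v_1,v_2,v_3$, and let $H$ be obtained from $G$ by deleting $u$, adding a triangle $u_1u_2u_3u_1$ on new vertices, and adding the edges $u_1v_1,u_2v_2,u_3v_3$. Then $H$ has a 3-decomposition.
   Context: All graphs are finite and simple; cubic means 3-regular. A 3-decomposition of a graph is a partition of its edge set into the edge sets of a spanning tree, a (possibly empty) 2-regular subgraph, and a (possibly empty) matching. *)

theory Defs
  imports Main
begin

definition simple_graph :: "'a set \<Rightarrow> 'a set set \<Rightarrow> bool" where
  "simple_graph V E \<longleftrightarrow> finite V \<and>
     (\<forall>e\<in>E. \<exists>x y. x \<in> V \<and> y \<in> V \<and> x \<noteq> y \<and> e = {x, y})"

definition degree :: "'a set set \<Rightarrow> 'a \<Rightarrow> nat" where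
  "degree F v = card {e \<in> F. v \<in> e}"

definition cubic :: "'a set \<Rightarrow> 'a set set \<Rightarrow> bool" where
  "cubic V E \<longleftrightarrow> simple_graph V E \<and> (\<forall>v\<in>V. degree E v = 3)"

definition connected_on :: "'a set \<Rightarrow> 'a set set \<Rightarrow> bool" where
  "connected_on V F \<longleftrightarrow>
     (\<forall>x\<in>V. \<forall>y\<in>V. (x, y) \<in> {(a, b). {a, b} \<in> F}\<^sup>*)"

definition is_cycle :: "'a set set \<Rightarrow> 'a list \<Rightarrow> bool" where
  "is_cycle F cs \<longleftrightarrow> length cs \<ge> 3 \<and> distinct cs \<and>
     (\<forall>i. Suc i < length cs \<longrightarrow> {cs ! i, cs ! Suc i} \<in> F) \<and>
     {last cs, hd cs} \<in> F"

definition acyclic_edges :: "'a set set \<Rightarrow> bool" where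
  "acyclic_edges F \<longleftrightarrow> \<not> (\<exists>cs. is_cycle F cs)"

definition spanning_tree :: "'a set \<Rightarrow> 'a set set \<Rightarrow> 'a set set \<Rightarrow> bool" where
  "spanning_tree V E T \<longleftrightarrow> T \<subseteq> E \<and> connected_on V T \<and> acyclic_edges T"

definition two_regular_sub :: "'a set \<Rightarrow> 'a set set \<Rightarrow> 'a set set \<Rightarrow> bool" where
  "two_regular_sub V E C \<longleftrightarrow> C \<subseteq> E \<and> (\<forall>v\<in>V. degree C v = 0 \<or> degree C v = 2)"

definition matching :: "'a set set \<Rightarrow> 'a set set \<Rightarrow> bool" where
  "matching E M \<longleftrightarrow> M \<subseteq> E \<and> (\<forall>e\<in>M. \<forall>f\<in>M. e \<noteq> f \<longrightarrow> e \<inter> f = {})"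

definition three_decomposition :: "'a set \<Rightarrow> 'a set set \<Rightarrow> bool" where
  "three_decomposition V E \<longleftrightarrow>
     (\<exists>T C M. spanning_tree V E T \<and> two_regular_sub V E C \<and> matching E M \<and>
        T \<union> C \<union> M = E \<and> T \<inter> C = {} \<and> T \<inter> M = {} \<and> C \<inter> M = {})"

end

theory Submission
  imports Defs
begin



definition erel :: "'a set set \<Rightarrow> ('a \<times> 'a) set" where
  "erel F = {(a, b). {a, b} \<in> F}"

lemma connected_on_erel: "connected_on V F \<longleftrightarrow> (\<forall>x\<in>V. \<forall>y\<in>V. (x, y) \<in> (erel F)\<^sup>*)"
  by (simp add: connected_on_def erel_def)

lemma erel_conv: "(erel F)\<inverse> = erel F"
  by (auto simp: erel_def insert_commute)

lemma erel_sym: "(a, b) \<in> (erel F)\<^sup>* \<Longrightarrow> (b, a) \<in> (erel F)\<^sup>*"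
  using rtrancl_converseI[of a b "erel F"] by (simp add: erel_conv)

lemma erel_step: "(a, b) \<in> (erel F)\<^sup>* \<Longrightarrow> {b, c} \<in> F \<Longrightarrow> (a, c) \<in> (erel F)\<^sup>*"
  by (rule rtrancl_into_rtrancl) (auto simp: erel_def)

lemma erel_mono: "F \<subseteq> G \<Longrightarrow> (a, b) \<in> (erel F)\<^sup>* \<Longrightarrow> (a, b) \<in> (erel G)\<^sup>*"
  by (rule rtrancl_mono[THEN subsetD, of "erel F"]) (auto simp: erel_def)

lemma cut:
  assumes "(a, b) \<in> (erel F)\<^sup>*" "a \<in> S" "\<And>x y. {x, y} \<in> F \<Longrightarrow> x \<in> S \<Longrightarrow> y \<in> S"
  shows "b \<in> S"
  using assms(1,2) by induction (auto simp: erel_def dest: assms(3))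

lemma rtrancl_map:
  assumes "(a, b) \<in> (erel F)\<^sup>*" "\<And>x y. {x, y} \<in> F \<Longrightarrow> f x = f y \<or> {f x, f y} \<in> G"
  shows "(f a, f b) \<in> (erel G)\<^sup>*"
  using assms(1)
proof induction
  case base then show ?case by simp
next
  case (step y z)
  then have "{y, z} \<in> F" by (simp add: erel_def)
  then have "f y = f z \<or> {f y, f z} \<in> G" by (rule assms(2))
  then show ?case using step.IH erel_step by metis
qed

lemma dnth: "distinct xs \<Longrightarrow> xs ! i = xs ! j \<Longrightarrow> i < length xs \<Longrightarrow> j < length xs \<Longrightarrow> i = j"
  by (simp add: nth_eq_iff_index_eq)

lemma cycle_nonbridge:
  assumes "is_cycle F cs"
  shows "\<exists>a b. {a, b} \<in> F \<and> a \<noteq> b \<and> (a, b) \<in> (erel (F - {{a, b}}))\<^sup>*"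
proof -
  define n where "n = length cs"
  have n3: "n \<ge> 3" and dist: "distinct cs" and ed: "\<And>i. Suc i < n \<Longrightarrow> {cs ! i, cs ! Suc i} \<in> F"
    and le: "{last cs, hd cs} \<in> F"
    using assms by (auto simp: is_cycle_def n_def)
  have ne: "cs \<noteq> []" using n3 n_def by auto
  have hd: "hd cs = cs ! 0" using ne by (simp add: hd_conv_nth)
  have lst: "last cs = cs ! (n - 1)" using ne by (simp add: last_conv_nth n_def)
  define F' where "F' = F - {{cs ! 0, cs ! 1}}"
  have path: "1 \<le> k \<Longrightarrow> k < n \<Longrightarrow> (cs ! 1, cs ! k) \<in> (erel F')\<^sup>*" for k
  proof (induction k)
    case 0 then show ?case by simp
  next
    case (Suc k)
    show ?case
    proof (cases "k = 0")
      case True then show ?thesis by simp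
    next
      case False
      then have ih: "(cs ! 1, cs ! k) \<in> (erel F')\<^sup>*" using Suc by simp
      have "{cs ! k, cs ! Suc k} \<in> F" using ed Suc by simp
      moreover have "{cs ! k, cs ! Suc k} \<noteq> {cs ! 0, cs ! 1}"
      proof
        assume "{cs ! k, cs ! Suc k} = {cs ! 0, cs ! 1}"
        then have "cs ! k = cs ! 1 \<and> cs ! Suc k = cs ! 0 \<or> cs ! k = cs ! 0"
          by (auto simp: doubleton_eq_iff)
        moreover have kl: "k < length cs" "Suc k < length cs" "0 < length cs" "1 < length cs"
          using Suc.prems n_def n3 by auto
        moreover have "cs ! k \<noteq> cs ! 0" using dnth[OF dist, of k 0] kl False by auto
        moreover have "cs ! k = cs ! 1 \<Longrightarrow> k = 1" using dnth[OF dist, of k 1] kl by auto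
        moreover have "cs ! Suc (Suc 0) \<noteq> cs ! 0" using dnth[OF dist, of "Suc (Suc 0)" 0] kl n3 n_def by auto
        ultimately show False by auto
      qed
      ultimately have "{cs ! k, cs ! Suc k} \<in> F'" by (simp add: F'_def)
      then show ?thesis using ih erel_step by metis
    qed
  qed
  have p1: "(cs ! 1, cs ! (n - 1)) \<in> (erel F')\<^sup>*" using path n3 by simp
  have "{cs ! (n - 1), cs ! 0} \<in> F" using le hd lst by simp
  moreover have "{cs ! (n - 1), cs ! 0} \<noteq> {cs ! 0, cs ! 1}"
  proof
    assume "{cs ! (n - 1), cs ! 0} = {cs ! 0, cs ! 1}"
    then have "cs ! (n - 1) = cs ! 0 \<or> cs ! (n - 1) = cs ! 1" by (auto simp: doubleton_eq_iff)
    moreover have lt: "n - 1 < length cs" "0 < length cs" "1 < length cs" "n - 1 \<noteq> 0" "n - 1 \<noteq> 1"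
      using n3 n_def by auto
    moreover have "cs ! (n - 1) \<noteq> cs ! 0" using dnth[OF dist _ lt(1) lt(2)] lt(4) by blast
    moreover have "cs ! (n - 1) \<noteq> cs ! 1" using dnth[OF dist _ lt(1) lt(3)] lt(5) by blast
    ultimately show False by blast
  qed
  ultimately have "{cs ! (n - 1), cs ! 0} \<in> F'" by (simp add: F'_def)
  then have "(cs ! 1, cs ! 0) \<in> (erel F')\<^sup>*" using p1 erel_step by metis
  then have "(cs ! 0, cs ! 1) \<in> (erel F')\<^sup>*" by (rule erel_sym)
  moreover have "{cs ! 0, cs ! 1} \<in> F" using ed n3 by simp
  moreover have "cs ! 0 \<noteq> cs ! 1"
  proof
    assume "cs ! 0 = cs ! 1"
    moreover have "0 < length cs" "1 < length cs" using n3 n_def by auto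
    ultimately have "(0::nat) = 1" using dnth[OF dist] by blast
    then show False by simp
  qed
  ultimately show ?thesis unfolding F'_def by blast
qed



lemma path_distinct:
  assumes "(a, b) \<in> R\<^sup>*"
  shows "\<exists>ps. ps \<noteq> [] \<and> hd ps = a \<and> last ps = b \<and> distinct ps \<and>
           (\<forall>i. Suc i < length ps \<longrightarrow> (ps ! i, ps ! Suc i) \<in> R)"
  using assms
proof (induction rule: converse_rtrancl_induct)
  case base
  then show ?case by (intro exI[of _ "[b]"]) auto
next
  case (step x y)
  then obtain ps where ps: "ps \<noteq> []" "hd ps = y" "last ps = b" "distinct ps"
    "\<forall>i. Suc i < length ps \<longrightarrow> (ps ! i, ps ! Suc i) \<in> R" by blast
  show ?case
  proof (cases "x \<in> set ps")
    case True
    then obtain k where k: "k < length ps" "ps ! k = x" by (auto simp: in_set_conv_nth)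
    show ?thesis
    proof (intro exI[of _ "drop k ps"] conjI allI impI)
      show "drop k ps \<noteq> []" using k by simp
      show "hd (drop k ps) = x" using k by (simp add: hd_drop_conv_nth)
      show "last (drop k ps) = b" using k ps by simp
      show "distinct (drop k ps)" using ps by simp
      fix i assume "Suc i < length (drop k ps)"
      then show "(drop k ps ! i, drop k ps ! Suc i) \<in> R" using ps(5)[rule_format, of "k + i"] k
        by simp
    qed
  next
    case False
    show ?thesis
    proof (intro exI[of _ "x # ps"] conjI allI impI)
      show "last (x # ps) = b" using ps by simp
      show "distinct (x # ps)" using ps False by simp
      fix i assume i: "Suc i < length (x # ps)"
      show "((x # ps) ! i, (x # ps) ! Suc i) \<in> R"
      proof (cases i)
        case 0 then show ?thesis using step.hyps ps by (simp add: hd_conv_nth)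
      next
        case (Suc j) then show ?thesis using ps(5) i by simp
      qed
    qed simp_all
  qed
qed



lemma bridge_of_acyclic:
  assumes "acyclic_edges F" "{a, b} \<in> F" "a \<noteq> b"
  shows "(a, b) \<notin> (erel (F - {{a, b}}))\<^sup>*"
proof
  assume h: "(a, b) \<in> (erel (F - {{a, b}}))\<^sup>*"
  obtain ps where ps: "ps \<noteq> []" "hd ps = a" "last ps = b" "distinct ps"
    "\<forall>i. Suc i < length ps \<longrightarrow> (ps ! i, ps ! Suc i) \<in> erel (F - {{a, b}})"
    using path_distinct[OF h] by blast
  have l2: "length ps \<ge> 2"
  proof (rule ccontr)
    assume "\<not> ?thesis"
    moreover have "length ps \<noteq> 0" using ps(1) by simp
    ultimately have "length ps = 1" by linarith
    then have "hd ps = last ps" using ps(1) by (simp add: hd_conv_nth last_conv_nth)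
    with ps assms(3) show False by simp
  qed
  have l3: "length ps \<ge> 3"
  proof (rule ccontr)
    assume "\<not> ?thesis"
    with l2 have L: "length ps = 2" by simp
    then have "ps ! 0 = a" "ps ! 1 = b" using ps by (auto simp: hd_conv_nth last_conv_nth)
    moreover have "(ps ! 0, ps ! 1) \<in> erel (F - {{a, b}})" using ps(5) L by simp
    ultimately show False by (simp add: erel_def)
  qed
  have "is_cycle F ps"
    unfolding is_cycle_def
  proof (intro conjI allI impI)
    fix i assume "Suc i < length ps"
    then show "{ps ! i, ps ! Suc i} \<in> F" using ps(5) by (auto simp: erel_def)
  next
    show "{last ps, hd ps} \<in> F" using ps assms by (simp add: insert_commute)
  next
    show "3 \<le> length ps" by (rule l3)
  next
    show "distinct ps" by (rule ps(4))
  qed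
  then show False using assms(1) by (auto simp: acyclic_edges_def)
qed




locale L =
  fixes V :: "'a set" and E :: "'a set set" and u v1 v2 v3 u1 u2 u3 :: 'a
  assumes cub: "cubic V E" and uV: "u \<in> V"
    and e1: "{u, v1} \<in> E" and e2: "{u, v2} \<in> E" and e3: "{u, v3} \<in> E"
    and d12: "v1 \<noteq> v2" and d13: "v1 \<noteq> v3" and d23: "v2 \<noteq> v3"
    and n1: "u1 \<notin> V" and n2: "u2 \<notin> V" and n3: "u3 \<notin> V"
    and f12: "u1 \<noteq> u2" and f13: "u1 \<noteq> u3" and f23: "u2 \<noteq> u3"
begin

definition "U = {u1, u2, u3}"
definition "nu x = (if x = u1 then v1 else if x = u2 then v2 else v3)"
definition "Ent = {e \<in> E. u \<notin> e} \<union> {{u1, v1}, {u2, v2}, {u3, v3}}"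
definition "Tri = {{u1, u2}, {u2, u3}, {u3, u1}}"
definition "V' = (V - {u}) \<union> {u1, u2, u3}"
definition "E' = Ent \<union> Tri"
definition "phi x = (if x \<in> U then u else x)"
definition "lift F = {g \<in> Ent. phi ` g \<in> F}"

lemma edge: "e \<in> E \<Longrightarrow> \<exists>x y. x \<in> V \<and> y \<in> V \<and> x \<noteq> y \<and> e = {x, y}"
  using cub by (auto simp: cubic_def simple_graph_def)

lemma edge_sub: "e \<in> E \<Longrightarrow> e \<subseteq> V"
  using edge by blast

lemma finV: "finite V" using cub by (auto simp: cubic_def simple_graph_def)

lemma finE: "finite E"
proof -
  have "E \<subseteq> Pow V" using edge_sub by blast
  then show ?thesis using finV by (meson finite_Pow_iff finite_subset)
qed

lemma edge_ne: "{x, y} \<in> E \<Longrightarrow> x \<noteq> y"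
  using edge by (metis doubleton_eq_iff insert_absorb2)

lemma vV: "v1 \<in> V" "v2 \<in> V" "v3 \<in> V" "v1 \<noteq> u" "v2 \<noteq> u" "v3 \<noteq> u"
  using edge_sub[OF e1] edge_sub[OF e2] edge_sub[OF e3] edge_ne[OF e1] edge_ne[OF e2] edge_ne[OF e3]
  by auto

lemma uedges: "e \<in> E \<Longrightarrow> u \<in> e \<Longrightarrow> e = {u, v1} \<or> e = {u, v2} \<or> e = {u, v3}"
proof -
  assume a: "e \<in> E" "u \<in> e"
  let ?S = "{e \<in> E. u \<in> e}"
  let ?A = "{{u, v1}, {u, v2}, {u, v3}}"
  have cS: "card ?S = 3" using cub uV by (auto simp: cubic_def degree_def)
  have sub: "?A \<subseteq> ?S" using e1 e2 e3 by auto
  have "{u, v1} \<noteq> {u, v2}" "{u, v1} \<noteq> {u, v3}" "{u, v2} \<noteq> {u, v3}"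
    using d12 d13 d23 vV by (auto simp: doubleton_eq_iff)
  then have cA: "card ?A = 3" by simp
  have "finite ?S" using finE by simp
  then have "?A = ?S" using card_subset_eq[OF _ sub] cA cS by simp
  then show ?thesis using a by blast
qed

lemma U_cases: "x \<in> U \<Longrightarrow> x = u1 \<or> x = u2 \<or> x = u3" by (auto simp: U_def)

lemma U_notV: "x \<in> U \<Longrightarrow> x \<notin> V" using n1 n2 n3 by (auto simp: U_def)

lemma nu_V: "x \<in> U \<Longrightarrow> nu x \<in> V \<and> nu x \<noteq> u \<and> {u, nu x} \<in> E \<and> nu x \<notin> U"
  using vV e1 e2 e3 f12 f13 f23 U_notV by (auto simp: U_def nu_def)

lemma nu_inj: "x \<in> U \<Longrightarrow> y \<in> U \<Longrightarrow> nu x = nu y \<Longrightarrow> x = y"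
  using d12 d13 d23 f12 f13 f23 by (auto simp: U_def nu_def)

lemma phi_U: "x \<in> U \<Longrightarrow> phi x = u" by (simp add: phi_def)
lemma phi_nU: "x \<notin> U \<Longrightarrow> phi x = x" by (simp add: phi_def)
lemma phi_V: "x \<in> V \<Longrightarrow> phi x = x" using U_notV phi_nU by blast

lemma Ent_U: "x \<in> U \<Longrightarrow> {x, nu x} \<in> Ent"
  by (auto simp: U_def nu_def Ent_def f12 f13 f23)

lemma Ent_cases: "g \<in> Ent \<Longrightarrow> (g \<in> E \<and> u \<notin> g \<and> g \<subseteq> V) \<or> (\<exists>x\<in>U. g = {x, nu x})"
  using edge_sub f12 f13 f23 by (auto simp: Ent_def U_def nu_def)

lemma uU: "u \<notin> U" using uV U_notV by blast

lemma Ent_u: "g \<in> Ent \<Longrightarrow> u \<notin> g"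
  using Ent_cases nu_V uU by blast

lemma phi_E: "g \<in> E \<Longrightarrow> u \<notin> g \<Longrightarrow> phi ` g = g"
proof -
  assume "g \<in> E"
  then have "g \<subseteq> V" by (rule edge_sub)
  then show ?thesis using phi_V by (simp add: subset_eq image_iff)
qed

lemma phi_Ux: "x \<in> U \<Longrightarrow> phi ` {x, nu x} = {u, nu x}"
  using phi_U phi_nU nu_V by auto

lemma Ent_phi: "g \<in> Ent \<Longrightarrow> phi ` g \<in> E"
  using Ent_cases phi_E phi_Ux nu_V by metis

lemma Ent_U_edge: "g \<in> Ent \<Longrightarrow> x \<in> U \<Longrightarrow> x \<in> g \<Longrightarrow> g = {x, nu x}"
proof -
  assume a: "g \<in> Ent" "x \<in> U" "x \<in> g"
  from Ent_cases[OF a(1)] show ?thesis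
  proof
    assume "g \<in> E \<and> u \<notin> g \<and> g \<subseteq> V"
    then show ?thesis using a U_notV by blast
  next
    assume "\<exists>y\<in>U. g = {y, nu y}"
    then obtain y where y: "y \<in> U" "g = {y, nu y}" by blast
    then have "x = y" using a nu_V U_notV by auto
    then show ?thesis using y by simp
  qed
qed

lemma Ent_inj: "inj_on (image phi) Ent"
proof (rule inj_onI)
  fix g h assume g: "g \<in> Ent" and h: "h \<in> Ent" and eq: "phi ` g = phi ` h"
  show "g = h"
  proof (cases "\<exists>x\<in>U. g = {x, nu x}")
    case True
    then obtain x where x: "x \<in> U" "g = {x, nu x}" by blast
    then have "u \<in> phi ` h" using eq phi_Ux by auto
    then have "\<not> (h \<in> E \<and> u \<notin> h \<and> h \<subseteq> V)" using phi_E by auto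
    then obtain y where y: "y \<in> U" "h = {y, nu y}" using Ent_cases[OF h] by blast
    have "{u, nu x} = {u, nu y}" using eq x y phi_Ux by simp
    then have "nu x = nu y" using nu_V x y by (auto simp: doubleton_eq_iff)
    then have "x = y" using nu_inj x y by blast
    then show ?thesis using x y by simp
  next
    case False
    then have gE: "g \<in> E" "u \<notin> g" using Ent_cases[OF g] by auto
    then have "u \<notin> phi ` h" using eq phi_E by simp
    then have "\<not> (\<exists>y\<in>U. h = {y, nu y})" using phi_Ux by auto
    then have "h \<in> E" "u \<notin> h" using Ent_cases[OF h] by auto
    then show ?thesis using eq gE phi_E by simp
  qed
qed

lemma lift_sub: "lift F \<subseteq> Ent" by (auto simp: lift_def)

lemma lift_surj: "F \<subseteq> E \<Longrightarrow> f \<in> F \<Longrightarrow> \<exists>g\<in>lift F. phi ` g = f"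
proof -
  assume FE: "F \<subseteq> E" and f: "f \<in> F"
  show ?thesis
  proof (cases "u \<in> f")
    case True
    then have "f = {u, v1} \<or> f = {u, v2} \<or> f = {u, v3}" using uedges FE f by blast
    moreover have "u1 \<in> U" "u2 \<in> U" "u3 \<in> U" by (auto simp: U_def)
    moreover have "nu u1 = v1" "nu u2 = v2" "nu u3 = v3" using f12 f13 f23 by (auto simp: nu_def)
    ultimately obtain x where x: "x \<in> U" "f = {u, nu x}" by metis
    then have "{x, nu x} \<in> lift F" "phi ` {x, nu x} = f" using Ent_U[OF x(1)] phi_Ux[OF x(1)] f
      unfolding lift_def by simp_all
    then show ?thesis by blast
  next
    case False
    then have "f \<in> Ent" "phi ` f = f" using FE f phi_E by (auto simp: Ent_def)
    then show ?thesis using f by (auto simp: lift_def)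
  qed
qed

lemma deg_lift_V:
  assumes FE: "F \<subseteq> E" and x: "x \<in> V" "x \<noteq> u"
  shows "degree (lift F) x = degree F x"
proof -
  have "bij_betw (image phi) {g \<in> lift F. x \<in> g} {f \<in> F. x \<in> f}"
    unfolding bij_betw_def
  proof
    show "inj_on (image phi) {g \<in> lift F. x \<in> g}"
      by (rule inj_on_subset[OF Ent_inj]) (auto simp: lift_def)
    show "image phi ` {g \<in> lift F. x \<in> g} = {f \<in> F. x \<in> f}"
    proof
      show "image phi ` {g \<in> lift F. x \<in> g} \<subseteq> {f \<in> F. x \<in> f}"
        using phi_V[OF x(1)] by (force simp: lift_def)
    next
      show "{f \<in> F. x \<in> f} \<subseteq> image phi ` {g \<in> lift F. x \<in> g}"
      proof
        fix f assume "f \<in> {f \<in> F. x \<in> f}"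
        then have f: "f \<in> F" "x \<in> f" by auto
        then obtain g where g: "g \<in> lift F" "phi ` g = f" using lift_surj FE by blast
        then obtain y where y: "y \<in> g" "phi y = x" using f by auto
        have "y = x" using y x phi_U phi_nU by (cases "y \<in> U") auto
        then show "f \<in> image phi ` {g \<in> lift F. x \<in> g}" using g y by auto
      qed
    qed
  qed
  then show ?thesis unfolding degree_def by (rule bij_betw_same_card)
qed

lemma deg_lift_U:
  assumes xU: "x \<in> U"
  shows "{g \<in> lift F. x \<in> g} = (if {u, nu x} \<in> F then {{x, nu x}} else {})"
proof -
  have px: "phi ` {x, nu x} = {u, nu x}" by (rule phi_Ux[OF xU])
  have A: "g \<in> lift F \<and> x \<in> g \<longleftrightarrow> g = {x, nu x} \<and> {u, nu x} \<in> F" for g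
  proof
    assume "g \<in> lift F \<and> x \<in> g"
    then have g: "g \<in> Ent" "phi ` g \<in> F" "x \<in> g" by (auto simp: lift_def)
    then have "g = {x, nu x}" using Ent_U_edge xU by blast
    then show "g = {x, nu x} \<and> {u, nu x} \<in> F" using g(2) px by simp
  next
    assume "g = {x, nu x} \<and> {u, nu x} \<in> F"
    then show "g \<in> lift F \<and> x \<in> g" using Ent_U[OF xU] px unfolding lift_def by simp
  qed
  show ?thesis using A by auto
qed

lemma U_perm:
  assumes "{m, a, b} = U" "m \<noteq> a" "m \<noteq> b" "a \<noteq> b"
  shows "{{m, a}, {m, b}, {a, b}} = Tri"
proof -
  have "m \<in> U" "a \<in> U" "b \<in> U" using assms(1) by auto
  then show ?thesis using assms f12 f13 f23 unfolding U_def Tri_def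
    by (auto simp: insert_commute)
qed

lemma Tri_U: "t \<in> Tri \<Longrightarrow> t \<subseteq> U" by (auto simp: Tri_def U_def)

lemma Ent_Tri: "Ent \<inter> Tri = {}"
proof -
  have "g \<in> Ent \<Longrightarrow> \<not> g \<subseteq> U" for g
  proof
    assume g: "g \<in> Ent" "g \<subseteq> U"
    from Ent_cases[OF g(1)] show False
    proof
      assume "g \<in> E \<and> u \<notin> g \<and> g \<subseteq> V"
      then obtain x y where "x \<in> V" "g = {x, y}" using edge by blast
      then show False using g U_notV by auto
    next
      assume "\<exists>y\<in>U. g = {y, nu y}"
      then show False using g nu_V by auto
    qed
  qed
  then show ?thesis using Tri_U by blast
qed

end



context L begin

lemma nu_obtain:
  assumes "f \<in> E" "u \<in> f"
  obtains x where "x \<in> U" "f = {u, nu x}"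
proof -
  have "f = {u, v1} \<or> f = {u, v2} \<or> f = {u, v3}" using uedges assms by blast
  moreover have "u1 \<in> U" "u2 \<in> U" "u3 \<in> U" by (auto simp: U_def)
  moreover have "nu u1 = v1" "nu u2 = v2" "nu u3 = v3" using f12 f13 f23 by (auto simp: nu_def)
  ultimately show ?thesis using that by metis
qed

lemma key_cut:
  assumes TE: "T \<subseteq> E" and Ta: "acyclic_edges T"
    and jU: "j \<in> U" and oU: "w \<in> U" and mU: "m \<in> U"
    and jm: "j \<noteq> m" and om: "w \<noteq> m" and jo: "j \<noteq> w"
  shows "(m, j) \<notin> (erel ((lift T \<union> {{m, j}, {m, w}}) - {{m, j}}))\<^sup>*"
proof
  let ?T' = "(lift T \<union> {{m, j}, {m, w}}) - {{m, j}}"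
  assume h: "(m, j) \<in> (erel ?T')\<^sup>*"
  define R where "R = (if {u, nu j} \<in> T then {y. (nu j, y) \<in> (erel (T - {{u, nu j}}))\<^sup>*} else {})"
  define S where "S = insert j R"
  have njV: "nu j \<in> V" "nu j \<noteq> u" using nu_V[OF jU] by auto
  have RV: "R \<subseteq> V"
  proof
    fix y assume "y \<in> R"
    then have y: "(nu j, y) \<in> (erel (T - {{u, nu j}}))\<^sup>*" by (auto simp: R_def split: if_splits)
    show "y \<in> V"
      by (rule cut[OF y njV(1)]) (use TE edge_sub in blast)
  qed
  have uR: "u \<notin> R"
  proof
    assume uR: "u \<in> R"
    then have T1: "{u, nu j} \<in> T" by (auto simp: R_def split: if_splits)
    have "(nu j, u) \<in> (erel (T - {{u, nu j}}))\<^sup>*" using uR T1 by (simp add: R_def)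
    then have "(u, nu j) \<in> (erel (T - {{u, nu j}}))\<^sup>*" by (rule erel_sym)
    then show False using bridge_of_acyclic[OF Ta T1] njV by auto
  qed
  have mS: "m \<notin> S" using jm mU U_notV RV by (auto simp: S_def)
  have jS: "j \<in> S" by (simp add: S_def)
  have "(j, m) \<in> (erel ?T')\<^sup>*" using h by (rule erel_sym)
  then have "m \<in> S"
  proof (rule cut[OF _ jS])
    fix x y assume xy: "{x, y} \<in> ?T'" and xS: "x \<in> S"
    have xy2: "{x, y} \<in> lift T \<or> {x, y} = {m, w}" using xy by auto
    then show "y \<in> S"
    proof
      assume "{x, y} = {m, w}"
      then have "x = m \<or> x = w" by (auto simp: doubleton_eq_iff)
      then show ?thesis using xS jm jo RV U_notV mU oU by (auto simp: S_def)
    next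
      assume g: "{x, y} \<in> lift T"
      then have gE: "{x, y} \<in> Ent" "phi ` {x, y} \<in> T" by (auto simp: lift_def)
      show ?thesis
      proof (cases "x = j")
        case True
        then have g2: "{x, y} = {j, nu j}" using Ent_U_edge[OF gE(1) jU] by simp
        show ?thesis
        proof (cases "y = j")
          case True then show ?thesis by (simp add: S_def)
        next
          case False
          then have "y = nu j" using g2 by (auto simp: doubleton_eq_iff)
          moreover have "{u, nu j} \<in> T" using gE(2) g2 phi_Ux[OF jU] by simp
          ultimately show ?thesis by (simp add: S_def R_def)
        qed
      next
        case False
        then have xR: "x \<in> R" using xS by (simp add: S_def)
        then have T1: "{u, nu j} \<in> T" by (auto simp: R_def split: if_splits)
        have xr: "(nu j, x) \<in> (erel (T - {{u, nu j}}))\<^sup>*" using xR T1 by (simp add: R_def)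
        have xV: "x \<in> V" "x \<noteq> u" using xR RV uR by auto
        show ?thesis
        proof (cases "y \<in> U")
          case True
          then have g3: "{x, y} = {y, nu y}" using Ent_U_edge[OF gE(1)] by simp
          have xny: "x = nu y" using g3 xV True U_notV by (auto simp: doubleton_eq_iff)
          show ?thesis
          proof (cases "y = j")
            case True then show ?thesis by (simp add: S_def)
          next
            case False
            have "{u, nu y} \<in> T" using gE(2) g3 phi_Ux[OF \<open>y \<in> U\<close>] by simp
            moreover have "nu y \<noteq> nu j" using nu_inj[OF \<open>y \<in> U\<close> jU] False by blast
            then have "{u, nu y} \<noteq> {u, nu j}" by (auto simp: doubleton_eq_iff)
            ultimately have "{x, u} \<in> T - {{u, nu j}}" using xny by (simp add: insert_commute)
            then have "(nu j, u) \<in> (erel (T - {{u, nu j}}))\<^sup>*" using xr erel_step by metis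
            then have "u \<in> R" using T1 by (simp add: R_def)
            then show ?thesis using uR by simp
          qed
        next
          case False
          have "phi ` {x, y} = {x, y}" using phi_V[OF xV(1)] phi_nU[OF False] by simp
          then have "{x, y} \<in> T" using gE(2) by simp
          moreover have "u \<notin> {x, y}" using Ent_u[OF gE(1)] .
          then have "{x, y} \<noteq> {u, nu j}" by auto
          ultimately have "{x, y} \<in> T - {{u, nu j}}" by simp
          then have "(nu j, y) \<in> (erel (T - {{u, nu j}}))\<^sup>*" using xr erel_step by metis
          then show ?thesis using T1 by (simp add: S_def R_def)
        qed
      qed
    qed
  qed
  then show False using mS by simp
qed

lemma tree:
  assumes ST: "spanning_tree V E T" and P: "{m, a, b} = U" "m \<noteq> a" "m \<noteq> b" "a \<noteq> b"
  shows "spanning_tree V' E' (lift T \<union> {{m, a}, {m, b}})"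
proof -
  let ?T' = "lift T \<union> {{m, a}, {m, b}}"
  have TE: "T \<subseteq> E" and Tc: "connected_on V T" and Ta: "acyclic_edges T"
    using ST by (auto simp: spanning_tree_def)
  have mU: "m \<in> U" "a \<in> U" "b \<in> U" using P(1) by auto
  have sub: "?T' \<subseteq> E'" using lift_sub U_perm[OF P] by (auto simp: E'_def)
  have rU: "(m, x) \<in> (erel ?T')\<^sup>*" if "x \<in> U" for x
  proof -
    have "x = m \<or> x = a \<or> x = b" using that P(1) by auto
    moreover have "(m, a) \<in> (erel ?T')\<^sup>*" "(m, b) \<in> (erel ?T')\<^sup>*"
      by (auto intro!: erel_step[OF rtrancl_refl])
    ultimately show ?thesis by auto
  qed
  have rV: "(u, z) \<in> (erel T)\<^sup>* \<Longrightarrow> z = u \<or> (m, z) \<in> (erel ?T')\<^sup>*" for z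
  proof (induction rule: rtrancl_induct)
    case base then show ?case by simp
  next
    case (step y z)
    then have yz: "{y, z} \<in> T" by (simp add: erel_def)
    show ?case
    proof (cases "z = u")
      case True then show ?thesis by simp
    next
      case zu: False
      show ?thesis
      proof (cases "y = u")
        case True
        then have "{u, z} \<in> E" using yz TE by auto
        then obtain x where x: "x \<in> U" "{u, z} = {u, nu x}" using nu_obtain by blast
        then have z: "z = nu x" using zu by (auto simp: doubleton_eq_iff)
        have "{x, nu x} \<in> lift T" using Ent_U[OF x(1)] phi_Ux[OF x(1)] yz True x
          unfolding lift_def by simp
        then show ?thesis using rU[OF x(1)] z erel_step by (metis UnI1)
      next
        case False
        then have ih: "(m, y) \<in> (erel ?T')\<^sup>*" using step.IH by simp
        have "{y, z} \<in> E" using yz TE by auto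
        moreover have "u \<notin> {y, z}" using False zu by auto
        ultimately have "{y, z} \<in> Ent" "phi ` {y, z} = {y, z}" using phi_E by (auto simp: Ent_def)
        then have "{y, z} \<in> lift T" using yz by (simp add: lift_def)
        then show ?thesis using ih erel_step by (metis UnI1)
      qed
    qed
  qed
  have reach: "(m, x) \<in> (erel ?T')\<^sup>*" if "x \<in> V'" for x
  proof (cases "x \<in> U")
    case True then show ?thesis by (rule rU)
  next
    case False
    then have "x \<in> V" "x \<noteq> u" using that by (auto simp: V'_def U_def)
    then have "(u, x) \<in> (erel T)\<^sup>*" using Tc uV by (simp add: connected_on_erel)
    then show ?thesis using rV \<open>x \<noteq> u\<close> by blast
  qed
  have conn: "connected_on V' ?T'"
    unfolding connected_on_erel
  proof (intro ballI)
    fix x y assume xV: "x \<in> V'" and yV: "y \<in> V'"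
    have "(x, m) \<in> (erel ?T')\<^sup>*" using reach[OF xV] by (rule erel_sym)
    moreover have "(m, y) \<in> (erel ?T')\<^sup>*" using reach[OF yV] .
    ultimately
    show "(x, y) \<in> (erel ?T')\<^sup>*" by (rule rtrancl_trans)
  qed
  have acyc: "acyclic_edges ?T'"
    unfolding acyclic_edges_def
  proof
    assume "\<exists>cs. is_cycle ?T' cs"
    then obtain cs where "is_cycle ?T' cs" by blast
    from cycle_nonbridge[OF this] obtain p q where
      pq: "{p, q} \<in> ?T'" "p \<noteq> q" "(p, q) \<in> (erel (?T' - {{p, q}}))\<^sup>*" by blast
    show False
    proof (cases "{p, q} \<in> lift T")
      case True
      let ?f = "{phi p, phi q}"
      have gE: "{p, q} \<in> Ent" "phi ` {p, q} \<in> T" using True by (auto simp: lift_def)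
      have fT: "?f \<in> T" using gE(2) by simp
      have ne: "phi p \<noteq> phi q" using edge_ne fT TE by blast
      have "(phi p, phi q) \<in> (erel (T - {?f}))\<^sup>*"
      proof (rule rtrancl_map[OF pq(3)])
        fix x y assume xy: "{x, y} \<in> ?T' - {{p, q}}"
        show "phi x = phi y \<or> {phi x, phi y} \<in> T - {?f}"
        proof (cases "{x, y} \<in> lift T")
          case True
          then have h1: "{x, y} \<in> Ent" "phi ` {x, y} \<in> T" by (auto simp: lift_def)
          have "phi ` {x, y} \<noteq> phi ` {p, q}"
            using Ent_inj h1(1) gE(1) xy unfolding inj_on_def by blast
          then show ?thesis using h1 by simp
        next
          case False
          then have "{x, y} = {m, a} \<or> {x, y} = {m, b}" using xy by auto
          then have "x \<in> U" "y \<in> U" using mU by (auto simp: doubleton_eq_iff)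
          then show ?thesis using phi_U by simp
        qed
      qed
      then show False using bridge_of_acyclic[OF Ta fT ne] by simp
    next
      case False
      then have pq2: "{p, q} = {m, a} \<or> {p, q} = {m, b}" using pq(1) by auto
      have k1: "(m, a) \<notin> (erel (?T' - {{m, a}}))\<^sup>*"
        using key_cut[OF TE Ta mU(2) mU(3) mU(1)] P by auto
      have k2: "(m, b) \<notin> (erel (?T' - {{m, b}}))\<^sup>*"
        using key_cut[OF TE Ta mU(3) mU(2) mU(1)] P by (auto simp: insert_commute)
      from pq2 show False
      proof
        assume e: "{p, q} = {m, a}"
        then have "(p = m \<and> q = a) \<or> (p = a \<and> q = m)" by (auto simp: doubleton_eq_iff)
        then show False using pq(3) e k1 erel_sym by metis
      next
        assume e: "{p, q} = {m, b}"
        then have "(p = m \<and> q = b) \<or> (p = b \<and> q = m)" by (auto simp: doubleton_eq_iff)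
        then show False using pq(3) e k2 erel_sym by metis
      qed
    qed
  qed
  show ?thesis using sub conn acyc by (simp add: spanning_tree_def)
qed

end



context L begin

lemma lift_Un: "lift (A \<union> B) = lift A \<union> lift B" by (auto simp: lift_def)
lemma lift_Int: "lift A \<inter> lift B = lift (A \<inter> B)" by (auto simp: lift_def)
lemma lift_empty: "lift {} = {}" by (auto simp: lift_def)
lemma lift_E: "lift E = Ent" using Ent_phi by (auto simp: lift_def)

lemma lift_matching:
  assumes "matching E M"
  shows "\<And>g h. g \<in> lift M \<Longrightarrow> h \<in> lift M \<Longrightarrow> g \<noteq> h \<Longrightarrow> g \<inter> h = {}"
proof -
  fix g h assume g: "g \<in> lift M" and h: "h \<in> lift M" and ne: "g \<noteq> h"
  have gh: "g \<in> Ent" "h \<in> Ent" "phi ` g \<in> M" "phi ` h \<in> M" using g h by (auto simp: lift_def)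
  have "phi ` g \<noteq> phi ` h" using Ent_inj gh ne unfolding inj_on_def by blast
  then have "phi ` g \<inter> phi ` h = {}" using assms gh by (auto simp: matching_def)
  then show "g \<inter> h = {}" by auto
qed

lemma final:
  assumes ST: "spanning_tree V E T" and C2: "two_regular_sub V E C" and MM: "matching E M"
    and UN: "T \<union> C \<union> M = E" and D1: "T \<inter> C = {}" and D2: "T \<inter> M = {}" and D3: "C \<inter> M = {}"
    and P: "{m, a, b} = U" "m \<noteq> a" "m \<noteq> b" "a \<noteq> b"
    and CS: "({u, nu a} \<in> C \<and> {u, nu b} \<in> C \<and> {u, nu m} \<notin> C \<and> X = {{a, b}} \<and> Y = {}) \<or>
             ((\<forall>x\<in>U. {u, nu x} \<notin> C) \<and> {u, nu a} \<notin> M \<and> {u, nu b} \<notin> M \<and> X = {} \<and> Y = {{a, b}})"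
  shows "three_decomposition V' E'"
proof -
  let ?T' = "lift T \<union> {{m, a}, {m, b}}"
  let ?C' = "lift C \<union> X"
  let ?M' = "lift M \<union> Y"
  have mU: "m \<in> U" "a \<in> U" "b \<in> U" using P(1) by auto
  have TE: "T \<subseteq> E" using ST by (simp add: spanning_tree_def)
  have CE: "C \<subseteq> E" using C2 by (simp add: two_regular_sub_def)
  have ME: "M \<subseteq> E" using MM by (simp add: matching_def)
  have tri: "{{m, a}, {m, b}, {a, b}} = Tri" by (rule U_perm[OF P])
  have abTri: "{a, b} \<in> Tri" using tri by auto
  have XY: "X \<subseteq> {{a, b}}" "Y \<subseteq> {{a, b}}" "X \<union> Y = {{a, b}}" "X \<inter> Y = {}" using CS by auto
  have T': "spanning_tree V' E' ?T'" by (rule tree[OF ST P])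
  have C': "two_regular_sub V' E' ?C'"
    unfolding two_regular_sub_def
  proof (intro conjI ballI)
    show "?C' \<subseteq> E'" using lift_sub XY abTri by (auto simp: E'_def)
  next
    fix x assume xV: "x \<in> V'"
    show "degree ?C' x = 0 \<or> degree ?C' x = 2"
    proof (cases "x \<in> U")
      case False
      then have x: "x \<in> V" "x \<noteq> u" using xV by (auto simp: V'_def U_def)
      have "{e \<in> ?C'. x \<in> e} = {e \<in> lift C. x \<in> e}" using XY False mU by auto
      then have "degree ?C' x = degree C x" using deg_lift_V[OF CE x] by (simp add: degree_def)
      then show ?thesis using C2 x by (simp add: two_regular_sub_def)
    next
      case True
      have eq: "{e \<in> ?C'. x \<in> e} = {e \<in> lift C. x \<in> e} \<union> {e \<in> X. x \<in> e}" by auto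
      from CS show ?thesis
      proof
        assume c: "{u, nu a} \<in> C \<and> {u, nu b} \<in> C \<and> {u, nu m} \<notin> C \<and> X = {{a, b}} \<and> Y = {}"
        have xc: "x = m \<or> x = a \<or> x = b" using True P(1) by auto
        then show ?thesis
        proof (elim disjE)
          assume "x = m"
          then have e0: "{e \<in> ?C'. x \<in> e} = {}" using eq deg_lift_U[OF mU(1), of C] c P by auto
          show ?thesis unfolding degree_def e0 by simp
        next
          assume xa: "x = a"
          have "nu a \<noteq> b" using nu_V[OF mU(2)] mU by auto
          then have ne: "{a, nu a} \<noteq> {a, b}" by (auto simp: doubleton_eq_iff)
          have e0: "{e \<in> ?C'. x \<in> e} = {{a, nu a}, {a, b}}" using eq deg_lift_U[OF mU(2), of C] c xa by auto
          show ?thesis unfolding degree_def e0 using ne by simp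
        next
          assume xb: "x = b"
          have "nu b \<noteq> a" using nu_V[OF mU(3)] mU by auto
          then have ne: "{b, nu b} \<noteq> {a, b}" by (auto simp: doubleton_eq_iff)
          have e0: "{e \<in> ?C'. x \<in> e} = {{b, nu b}, {a, b}}" using eq deg_lift_U[OF mU(3), of C] c xb by auto
          show ?thesis unfolding degree_def e0 using ne by simp
        qed
      next
        assume c: "(\<forall>x\<in>U. {u, nu x} \<notin> C) \<and> {u, nu a} \<notin> M \<and> {u, nu b} \<notin> M \<and> X = {} \<and> Y = {{a, b}}"
        then have e0: "{e \<in> ?C'. x \<in> e} = {}" using eq deg_lift_U[OF True, of C] True by auto
        show ?thesis unfolding degree_def e0 by simp
      qed
    qed
  qed
  have M': "matching E' ?M'"
    unfolding matching_def
  proof (intro conjI ballI impI)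
    show "?M' \<subseteq> E'" using lift_sub XY abTri by (auto simp: E'_def)
  next
    fix g h assume g: "g \<in> ?M'" and h: "h \<in> ?M'" and ne: "g \<noteq> h"
    have noab: "k \<in> lift M \<Longrightarrow> k \<inter> {a, b} = {}" if "Y \<noteq> {}" for k
    proof -
      assume k: "k \<in> lift M"
      have c: "{u, nu a} \<notin> M" "{u, nu b} \<notin> M" using CS that by auto
      have "a \<notin> k" using deg_lift_U[OF mU(2), of M] c k by auto
      moreover have "b \<notin> k" using deg_lift_U[OF mU(3), of M] c k by auto
      ultimately show ?thesis by auto
    qed
    show "g \<inter> h = {}"
    proof (cases "g \<in> lift M")
      case gl: True
      show ?thesis
      proof (cases "h \<in> lift M")
        case True then show ?thesis using lift_matching[OF MM gl True ne] by simp
      next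
        case False
        then have "h = {a, b}" "Y \<noteq> {}" using h XY by auto
        then show ?thesis using noab gl by auto
      qed
    next
      case False
      then have gab: "g = {a, b}" "Y \<noteq> {}" using g XY by auto
      then have "h \<in> lift M" using h ne XY by auto
      then show ?thesis using noab gab by auto
    qed
  qed
  have un: "?T' \<union> ?C' \<union> ?M' = E'"
  proof -
    have "?T' \<union> ?C' \<union> ?M' = lift (T \<union> C \<union> M) \<union> ({{m, a}, {m, b}} \<union> (X \<union> Y))"
      by (auto simp: lift_Un)
    also have "\<dots> = Ent \<union> Tri" using UN lift_E XY(3) tri by auto
    finally show ?thesis by (simp add: E'_def)
  qed
  have liftEnt: "lift A \<subseteq> Ent" for A by (rule lift_sub)
  have triNE: "{{m, a}, {m, b}} \<inter> X = {}" "{{m, a}, {m, b}} \<inter> Y = {}"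
    using XY P by (auto simp: doubleton_eq_iff)
  have lTri: "lift A \<inter> Tri = {}" for A using liftEnt Ent_Tri by blast
  have sTri: "{{m, a}, {m, b}} \<subseteq> Tri" "X \<subseteq> Tri" "Y \<subseteq> Tri" using tri XY abTri by auto
  have dsj: "\<And>A B P Q. A \<inter> B = {} \<Longrightarrow> A \<inter> Q = {} \<Longrightarrow> P \<inter> B = {} \<Longrightarrow> P \<inter> Q = {} \<Longrightarrow>
      (A \<union> P) \<inter> (B \<union> Q) = {}" by blast
  have lS: "lift A \<inter> S = {}" if "S \<subseteq> Tri" for A S using lTri[of A] that by blast
  have Sl: "S \<inter> lift A = {}" if "S \<subseteq> Tri" for A S using lTri[of A] that by blast
  have d1: "?T' \<inter> ?C' = {}"
  proof (rule dsj)
    show "lift T \<inter> lift C = {}" using D1 lift_Int lift_empty by metis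
  qed (use triNE lS Sl sTri in auto)
  have d2: "?T' \<inter> ?M' = {}"
  proof (rule dsj)
    show "lift T \<inter> lift M = {}" using D2 lift_Int lift_empty by metis
  qed (use triNE lS Sl sTri in auto)
  have d3: "?C' \<inter> ?M' = {}"
  proof (rule dsj)
    show "lift C \<inter> lift M = {}" using D3 lift_Int lift_empty by metis
  qed (use XY(4) lS Sl sTri in auto)
  show ?thesis unfolding three_decomposition_def
    using T' C' M' un d1 d2 d3 by blast
qed

lemma main_L:
  assumes "three_decomposition V E"
  shows "three_decomposition V' E'"
proof -
  obtain T C M where ST: "spanning_tree V E T" and C2: "two_regular_sub V E C" and MM: "matching E M"
    and UN: "T \<union> C \<union> M = E" and D1: "T \<inter> C = {}" and D2: "T \<inter> M = {}" and D3: "C \<inter> M = {}"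
    using assms by (auto simp: three_decomposition_def)
  have TE: "T \<subseteq> E" using ST by (simp add: spanning_tree_def)
  have CE: "C \<subseteq> E" using C2 by (simp add: two_regular_sub_def)
  define A1 where "A1 = {u, v1}"
  define A2 where "A2 = {u, v2}"
  define A3 where "A3 = {u, v3}"
  have Ane: "A1 \<noteq> A2" "A1 \<noteq> A3" "A2 \<noteq> A3"
    using d12 d13 d23 vV by (auto simp: A1_def A2_def A3_def doubleton_eq_iff)
  have part: "A1 \<in> T \<or> A1 \<in> C \<or> A1 \<in> M" "A2 \<in> T \<or> A2 \<in> C \<or> A2 \<in> M" "A3 \<in> T \<or> A3 \<in> C \<or> A3 \<in> M"
    using UN e1 e2 e3 by (auto simp: A1_def A2_def A3_def)
  have dj: "\<And>A. \<not> (A \<in> T \<and> A \<in> C)" "\<And>A. \<not> (A \<in> T \<and> A \<in> M)" "\<And>A. \<not> (A \<in> C \<and> A \<in> M)"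
    using D1 D2 D3 by auto
  have Ceq: "{e \<in> C. u \<in> e} = (if A1 \<in> C then {A1} else {}) \<union> (if A2 \<in> C then {A2} else {}) \<union>
      (if A3 \<in> C then {A3} else {})"
    using uedges CE by (auto simp: A1_def A2_def A3_def)
  have Cdeg: "card {e \<in> C. u \<in> e} = 0 \<or> card {e \<in> C. u \<in> e} = 2"
    using C2 uV by (auto simp: two_regular_sub_def degree_def)
  have Cc: "A1 \<in> C \<Longrightarrow> A2 \<in> C \<or> A3 \<in> C" "A2 \<in> C \<Longrightarrow> A1 \<in> C \<or> A3 \<in> C"
    "A3 \<in> C \<Longrightarrow> A1 \<in> C \<or> A2 \<in> C" "\<not> (A1 \<in> C \<and> A2 \<in> C \<and> A3 \<in> C)"
    using Cdeg unfolding Ceq using Ane by (auto split: if_splits)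
  have uA: "u \<in> A1" "u \<in> A2" "u \<in> A3" by (auto simp: A1_def A2_def A3_def)
  have Mc: "\<not> (A1 \<in> M \<and> A2 \<in> M)" "\<not> (A1 \<in> M \<and> A3 \<in> M)" "\<not> (A2 \<in> M \<and> A3 \<in> M)"
    using MM Ane uA unfolding matching_def by blast+
  have Tex: "A1 \<in> T \<or> A2 \<in> T \<or> A3 \<in> T"
  proof (rule ccontr)
    assume nT: "\<not> ?thesis"
    have "(u, v1) \<in> (erel T)\<^sup>*" using ST uV vV by (simp add: spanning_tree_def connected_on_erel)
    then have "v1 \<in> {u}"
    proof (rule cut)
      fix x y assume xy: "{x, y} \<in> T" and x: "x \<in> {u}"
      then have "{u, y} \<in> E" using TE by auto
      then have "{u, y} = A1 \<or> {u, y} = A2 \<or> {u, y} = A3" using uedges by (auto simp: A1_def A2_def A3_def)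
      then show "y \<in> {u}" using xy x nT by auto
    qed simp
    then show False using vV by simp
  qed
  have nu1: "nu u1 = v1" "nu u2 = v2" "nu u3 = v3" using f12 f13 f23 by (auto simp: nu_def)
  have UU: "U = {u1, u2, u3}" by (simp add: U_def)
  have allC: "(\<forall>x\<in>U. {u, nu x} \<notin> C) \<longleftrightarrow> A1 \<notin> C \<and> A2 \<notin> C \<and> A3 \<notin> C"
    using nu1 by (auto simp: UU A1_def A2_def A3_def)
  note fin = final[OF ST C2 MM UN D1 D2 D3]
  have cases: "(A1 \<in> C \<and> A2 \<in> C \<and> A3 \<in> T) \<or> (A1 \<in> C \<and> A3 \<in> C \<and> A2 \<in> T) \<or>
      (A2 \<in> C \<and> A3 \<in> C \<and> A1 \<in> T) \<or>
      (A1 \<notin> C \<and> A2 \<notin> C \<and> A3 \<notin> C \<and> ((A2 \<notin> M \<and> A3 \<notin> M) \<or> (A1 \<notin> M \<and> A3 \<notin> M) \<or> (A1 \<notin> M \<and> A2 \<notin> M)))"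
    using part dj Cc Mc Tex by metis
  then show ?thesis
  proof (elim disjE conjE)
    assume "A1 \<in> C" "A2 \<in> C" "A3 \<in> T"
    then show ?thesis using fin[of u3 u1 u2 "{{u1, u2}}" "{}"] nu1 dj f12 f13 f23
      by (auto simp: UU A1_def A2_def A3_def insert_commute)
  next
    assume "A1 \<in> C" "A3 \<in> C" "A2 \<in> T"
    then show ?thesis using fin[of u2 u1 u3 "{{u1, u3}}" "{}"] nu1 dj f12 f13 f23
      by (auto simp: UU A1_def A2_def A3_def insert_commute)
  next
    assume "A2 \<in> C" "A3 \<in> C" "A1 \<in> T"
    then show ?thesis using fin[of u1 u2 u3 "{{u2, u3}}" "{}"] nu1 dj f12 f13 f23
      by (auto simp: UU A1_def A2_def A3_def insert_commute)
  next
    assume "A1 \<notin> C" "A2 \<notin> C" "A3 \<notin> C" "A2 \<notin> M" "A3 \<notin> M"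
    then show ?thesis using fin[of u1 u2 u3 "{}" "{{u2, u3}}"] nu1 allC f12 f13 f23
      by (auto simp: UU A1_def A2_def A3_def insert_commute)
  next
    assume "A1 \<notin> C" "A2 \<notin> C" "A3 \<notin> C" "A1 \<notin> M" "A3 \<notin> M"
    then show ?thesis using fin[of u2 u1 u3 "{}" "{{u1, u3}}"] nu1 allC f12 f13 f23
      by (auto simp: UU A1_def A2_def A3_def insert_commute)
  next
    assume "A1 \<notin> C" "A2 \<notin> C" "A3 \<notin> C" "A1 \<notin> M" "A2 \<notin> M"
    then show ?thesis using fin[of u3 u1 u2 "{}" "{{u1, u2}}"] nu1 allC f12 f13 f23
      by (auto simp: UU A1_def A2_def A3_def insert_commute)
  qed
qed

end

theorem lemma14:
  fixes V :: "'a set" and E :: "'a set set" and u v1 v2 v3 u1 u2 u3 :: 'a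
  assumes "cubic V E"
    and "three_decomposition V E"
    and "u \<in> V"
    and "{u, v1} \<in> E" and "{u, v2} \<in> E" and "{u, v3} \<in> E"
    and "v1 \<noteq> v2" and "v1 \<noteq> v3" and "v2 \<noteq> v3"
    and "u1 \<notin> V" and "u2 \<notin> V" and "u3 \<notin> V"
    and "u1 \<noteq> u2" and "u1 \<noteq> u3" and "u2 \<noteq> u3"
  shows "three_decomposition ((V - {u}) \<union> {u1, u2, u3})
           ({e \<in> E. u \<notin> e} \<union>
            {{u1, u2}, {u2, u3}, {u3, u1}, {u1, v1}, {u2, v2}, {u3, v3}})"
proof -
  interpret L V E u v1 v2 v3 u1 u2 u3
    using assms by unfold_locales auto
  have "three_decomposition V' E'" using main_L assms(2) .
  moreover have "V' = (V - {u}) \<union> {u1, u2, u3}" by (simp add: V'_def)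
  moreover have "E' = {e \<in> E. u \<notin> e} \<union>
            {{u1, u2}, {u2, u3}, {u3, u1}, {u1, v1}, {u2, v2}, {u3, v3}}"
    by (auto simp: E'_def Ent_def Tri_def)
  ultimately show ?thesis by simp
qed



end
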